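(* For $k\geq2$ and $d\geq3$, $R_{d,\dots,d}(W_d^{\otimes k})\leq 2^{k-1}kd$, where $W_d^{\otimes k}\in S^d\mathbb{C}^2\otimes\cdots\otimes S^d\mathbb{C}^2$ ($k$ factors).
   Context: Identify $S^d\mathbb{C}^2$ with binary forms of degree $d$ in a basis $\{x,y\}$; $W_d=x^{d-1}y$. The partially symmetric rank $R_{d_1,\dots,d_k}(T)$ is the minimal $r$ such that $T=\sum_{i=1}^r v_{i,1}^{\otimes d_1}\otimes\cdots\otimes v_{i,k}^{\otimes d_k}$ with $v_{i,j}\in\mathbb{C}^2$. *)

theory Defs
  imports Complex_Main
begin

text \<open>An element of S^{d_1}C^2 \<otimes> ... \<otimes> S^{d_k}C^2 is identified with a
multihomogeneous form in k pairs of variables (x_j, y_j), j < k, of multidegree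
(d_1,...,d_k); over the infinite field C such a form is determined by its polynomial
function, which is what we use. The vector v = (a,b) in C^2 corresponds to the linear
form a x + b y, so v^{\<otimes> d} corresponds to (a x + b y)^d.\<close>

type_synonym ptensor = "(nat \<Rightarrow> complex) \<Rightarrow> (nat \<Rightarrow> complex) \<Rightarrow> complex"

definition ps_rank :: "nat \<Rightarrow> (nat \<Rightarrow> nat) \<Rightarrow> ptensor \<Rightarrow> nat" where
  "ps_rank k ds T = (LEAST r. \<exists>a b :: nat \<Rightarrow> nat \<Rightarrow> complex.
      \<forall>x y. T x y = (\<Sum>i<r. \<Prod>j<k. (a i j * x j + b i j * y j) ^ ds j))"

definition W_pow :: "nat \<Rightarrow> nat \<Rightarrow> ptensor" where
  "W_pow k d = (\<lambda>x y. \<Prod>j<k. x j ^ (d - 1) * y j)"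

end

theory Submission imports Defs "HOL-Computational_Algebra.Polynomial" begin

lemma rank_le:
  fixes T :: ptensor and E :: "'e set"
  assumes k: "k \<ge> 1" and d: "d \<ge> 1" and fin: "finite E"
    and T: "\<And>x y. T x y = (\<Sum>e\<in>E. c e * (\<Prod>j<k. (A e j * x j + B e j * y j) ^ d))"
  shows "ps_rank k (\<lambda>_. d) T \<le> card E"
proof -
  obtain h where h: "bij_betw h {0..<card E} E" using ex_bij_betw_nat_finite[OF fin] by blast
  have "\<exists>r. r ^ d = c e" for e
  proof (cases "c e = 0")
    case True then show ?thesis using d by (intro exI[of _ 0]) auto
  next
    case False
    have "(\<lambda>z. (root d (norm (c e)) * cis (Arg (c e) / d)) * z) ` {z. z ^ d = 1} = {z. z ^ d = c e}"
      using bij_betw_imp_surj_on[OF bij_betw_nth_root_unity[OF False, of d]] d by simp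
    moreover have "(1::complex) \<in> {z. z ^ d = 1}" by simp
    ultimately show ?thesis by blast
  qed
  then obtain r where r: "\<And>e. r e ^ d = c e" by metis
  obtain k' where k': "k = Suc k'" using k by (cases k) auto
  define a where "a = (\<lambda>i j. if j = 0 then r (h i) * A (h i) j else A (h i) j)"
  define b where "b = (\<lambda>i j. if j = 0 then r (h i) * B (h i) j else B (h i) j)"
  have "\<forall>x y. T x y = (\<Sum>i<card E. \<Prod>j<k. (a i j * x j + b i j * y j) ^ d)"
  proof (intro allI)
    fix x y
    have "T x y = (\<Sum>i\<in>{0..<card E}. c (h i) * (\<Prod>j<k. (A (h i) j * x j + B (h i) j * y j) ^ d))"
      unfolding T by (rule sum.reindex_bij_betw[OF h, symmetric])
    also have "\<dots> = (\<Sum>i<card E. \<Prod>j<k. (a i j * x j + b i j * y j) ^ d)"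
    proof (rule sum.cong)
      fix i
      show "c (h i) * (\<Prod>j<k. (A (h i) j * x j + B (h i) j * y j) ^ d) =
          (\<Prod>j<k. (a i j * x j + b i j * y j) ^ d)"
        unfolding k' prod.lessThan_Suc_shift a_def b_def
        by (simp add: r[symmetric] power_mult_distrib[symmetric] algebra_simps)
    qed auto
    finally show "T x y = (\<Sum>i<card E. \<Prod>j<k. (a i j * x j + b i j * y j) ^ d)" .
  qed
  then show ?thesis unfolding ps_rank_def by (intro Least_le) blast
qed


lemma rootsum:
  fixes N e :: nat
  assumes N: "N > 0"
  defines "\<omega> \<equiv> cis (2 * pi / real N)"
  shows "(\<Sum>i<N. (\<omega> ^ e) ^ i) = (if N dvd e then of_nat N else 0)"
proof -
  have pw: "\<omega> ^ m = cis (2 * pi * real m / real N)" for m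
    by (simp add: \<omega>_def DeMoivre mult_ac)
  have wN: "\<omega> ^ N = 1" using N by (simp add: pw complex_eq_iff)
  have we: "\<omega> ^ e = \<omega> ^ (e mod N)"
  proof -
    have "\<omega> ^ e = \<omega> ^ (N * (e div N) + e mod N)" by (metis mult_div_mod_eq)
    also have "\<dots> = \<omega> ^ (e mod N)" by (simp only: power_add power_mult wN) simp
    finally show ?thesis .
  qed
  show ?thesis
  proof (cases "N dvd e")
    case True
    then have "\<omega> ^ e = 1" using we by simp
    then show ?thesis using True by simp
  next
    case False
    have "e mod N \<noteq> 0" using False by (simp add: dvd_eq_mod_eq_0)
    moreover have inj: "inj_on (\<lambda>k. cis (2 * pi * real k / real N)) {..<N}"
      using bij_betw_roots_unity[OF N] by (simp add: bij_betw_def)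
    ultimately have "\<omega> ^ (e mod N) \<noteq> \<omega> ^ 0"
      unfolding pw using N by (metis inj_onD lessThan_iff mod_less_divisor)
    then have ne: "\<omega> ^ e \<noteq> 1" using we by simp
    have "(\<Sum>i<N. (\<omega> ^ e) ^ i) = ((\<omega> ^ e) ^ N - 1) / (\<omega> ^ e - 1)"
      using ne by (subst geometric_sum) auto
    also have "(\<omega> ^ e) ^ N = 1" by (simp add: power_mult[symmetric] mult.commute[of e] power_mult wN)
    finally show ?thesis using False by simp
  qed
qed

lemma filter:
  fixes p :: "complex poly" and N k :: nat
  assumes N: "N > 0" and kN: "k < N" and deg: "degree p < N + k"
  defines "\<omega> \<equiv> cis (2 * pi / real N)"
  shows "(\<Sum>i<N. (\<omega> ^ i) ^ (N - k) * poly p (\<omega> ^ i)) = of_nat N * coeff p k"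
proof -
  have pe: "poly p z = (\<Sum>m<N+k. coeff p m * z ^ m)" for z
  proof -
    have "poly p z = (\<Sum>m\<le>degree p. coeff p m * z ^ m)" by (rule poly_altdef)
    also have "\<dots> = (\<Sum>m<N+k. coeff p m * z ^ m)"
      using deg by (intro sum.mono_neutral_left) (auto simp: coeff_eq_0)
    finally show ?thesis .
  qed
  have "(\<Sum>i<N. (\<omega> ^ i) ^ (N - k) * poly p (\<omega> ^ i))
      = (\<Sum>i<N. \<Sum>m<N+k. coeff p m * (\<omega> ^ (N - k + m)) ^ i)"
    unfolding pe sum_distrib_left
    by (intro sum.cong refl) (simp add: power_add power_mult[symmetric] mult.commute algebra_simps)
  also have "\<dots> = (\<Sum>m<N+k. coeff p m * (\<Sum>i<N. (\<omega> ^ (N - k + m)) ^ i))"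
    by (subst sum.swap) (simp add: sum_distrib_left)
  also have "\<dots> = (\<Sum>m<N+k. if m = k then coeff p m * of_nat N else 0)"
  proof (intro sum.cong refl)
    fix m assume m: "m \<in> {..<N+k}"
    have "N dvd (N - k + m) \<longleftrightarrow> m = k"
    proof
      assume "N dvd (N - k + m)"
      then obtain q where q: "N - k + m = N * q" by blast
      have "q = 1"
      proof -
        have "N * q > 0" using q kN by linarith
        moreover have "N * q < N * 2" using q m kN by (simp add: mult_2_right)
        ultimately have "0 < q" "q < 2" by simp_all
        then show ?thesis by linarith
      qed
      then show "m = k" using q kN by simp
    qed (use kN in simp)
    then show "coeff p m * (\<Sum>i<N. (\<omega> ^ (N - k + m)) ^ i) = (if m = k then coeff p m * of_nat N else 0)"
      unfolding \<omega>_def using rootsum[OF N, of "N - k + m"] by simp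
  qed
  also have "\<dots> = of_nat N * coeff p k" using kN by (simp add: sum.delta)
  finally show ?thesis .
qed


lemma coeff_mult_1:
  fixes p q :: "'a::comm_semiring_1 poly"
  shows "coeff (p * q) 1 = coeff p 0 * coeff q 1 + coeff p 1 * coeff q 0"
  by (simp add: coeff_mult atMost_Suc add.commute)

lemma coeff_pow_1:
  fixes p :: "'a::comm_semiring_1 poly"
  shows "coeff (p ^ n) 1 = of_nat n * coeff p 0 ^ (n - 1) * coeff p 1"
proof (induction n)
  case 0 then show ?case by simp
next
  case (Suc n)
  have "coeff (p ^ Suc n) 1 = coeff p 0 * coeff (p ^ n) 1 + coeff p 1 * coeff (p ^ n) 0"
    by (simp only: power_Suc coeff_mult_1)
  then show ?case unfolding Suc.IH coeff_0_power
    by (cases n) (simp_all add: algebra_simps)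
qed

lemma mul_step:
  fixes p q :: "'a::comm_semiring_1 poly"
  assumes p0: "coeff p 0 = 0" and p2: "coeff p 2 = 0"
    and qlow: "\<And>i. i < c \<Longrightarrow> coeff q i = 0" and qs: "coeff q (Suc c) = 0"
  shows "\<And>n. n < Suc c \<Longrightarrow> coeff (p * q) n = 0"
    and "coeff (p * q) (Suc c) = coeff p 1 * coeff q c"
    and "coeff (p * q) (Suc (Suc c)) = 0"
proof -
  fix n assume n: "n < Suc c"
  show "coeff (p * q) n = 0" unfolding coeff_mult
  proof (rule sum.neutral, intro ballI)
    fix i assume "i \<in> {..n}"
    then show "coeff p i * coeff q (n - i) = 0"
      using p0 qlow[of "n - i"] n by (cases i) auto
  qed
next
  have "coeff (p * q) (Suc c) = (\<Sum>i\<le>Suc c. if i = 1 then coeff p 1 * coeff q c else 0)"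
    unfolding coeff_mult
  proof (rule sum.cong[OF refl])
    fix i assume "i \<in> {..Suc c}"
    then show "coeff p i * coeff q (Suc c - i) = (if i = 1 then coeff p 1 * coeff q c else 0)"
      using p0 qlow[of "Suc c - i"] by (cases "i = 0"; cases "i = 1") auto
  qed
  then show "coeff (p * q) (Suc c) = coeff p 1 * coeff q c" by (simp add: sum.delta)
next
  show "coeff (p * q) (Suc (Suc c)) = 0" unfolding coeff_mult
  proof (rule sum.neutral, intro ballI)
    fix i assume "i \<in> {..Suc (Suc c)}"
    then show "coeff p i * coeff q (Suc (Suc c) - i) = 0"
      using p0 p2 qs qlow[of "Suc (Suc c) - i"]
      by (cases "i = 0"; cases "i = 1"; cases "i = 2") (auto simp: numeral_2_eq_2)
  qed
qed

lemma prod_low: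
  fixes g :: "'b \<Rightarrow> 'a::comm_semiring_1 poly"
  assumes "finite S" and "\<And>j. j \<in> S \<Longrightarrow> coeff (g j) 0 = 0 \<and> coeff (g j) 2 = 0"
  shows "(\<forall>i<card S. coeff (\<Prod>j\<in>S. g j) i = 0) \<and>
         coeff (\<Prod>j\<in>S. g j) (card S) = (\<Prod>j\<in>S. coeff (g j) 1) \<and>
         coeff (\<Prod>j\<in>S. g j) (Suc (card S)) = 0"
  using assms
proof (induction S rule: finite_induct)
  case empty then show ?case by simp
next
  case (insert a S)
  then have IH: "\<forall>i<card S. coeff (\<Prod>j\<in>S. g j) i = 0"
      "coeff (\<Prod>j\<in>S. g j) (card S) = (\<Prod>j\<in>S. coeff (g j) 1)"
      "coeff (\<Prod>j\<in>S. g j) (Suc (card S)) = 0" by auto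
  have ga: "coeff (g a) 0 = 0" "coeff (g a) 2 = 0" using insert by auto
  note ms = mul_step[OF ga, of "card S" "\<Prod>j\<in>S. g j", OF _ IH(3)]
  show ?case using insert IH ms by auto
qed

lemma final_step:
  fixes A G :: "'a::comm_semiring_1 poly"
  assumes "\<And>i. i < c \<Longrightarrow> coeff G i = 0" and "coeff G (Suc c) = 0"
  shows "coeff (A * G) (Suc c) = coeff A 1 * coeff G c"
proof -
  have "coeff (A * G) (Suc c) = (\<Sum>i\<le>Suc c. if i = 1 then coeff A 1 * coeff G c else 0)"
    unfolding coeff_mult
  proof (rule sum.cong[OF refl])
    fix i assume "i \<in> {..Suc c}"
    then show "coeff A i * coeff G (Suc c - i) = (if i = 1 then coeff A 1 * coeff G c else 0)"
      using assms(1)[of "Suc c - i"] assms(2) by (cases "i = 0"; cases "i = 1") auto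
  qed
  then show ?thesis by (simp add: sum.delta)
qed


lemma coeff_g:
  fixes a b :: complex
  shows "coeff ([:a, -b:] ^ d) m = (-1) ^ m * coeff ([:a, b:] ^ d) m"
proof -
  have "[:a, -b:] ^ d = pcompose ([:a, b:] ^ d) [:0, -1:]"
    by (rule poly_eq_poly_eq_iff[THEN iffD1]) (auto simp: poly_pcompose)
  then show ?thesis by (simp add: coeff_pcompose_linear)
qed

theorem corollary3p7:
  fixes k d :: nat
  assumes "k \<ge> 2" and "d \<ge> 3"
  shows "ps_rank k (\<lambda>_. d) (W_pow k d) \<le> 2 ^ (k - 1) * k * d"
proof -
  define S where "S = {1..<k}"
  define N where "N = k * d"
  define \<omega> where "\<omega> = cis (2 * pi / real N)"
  define K :: complex where "K = of_nat N * of_nat d * (2 * of_nat d) ^ (k - 1)"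
  define s :: "nat set \<Rightarrow> nat \<Rightarrow> complex" where "s = (\<lambda>B j. if j = 0 \<or> j \<in> B then 1 else -1)"
  define E where "E = Pow S \<times> {..<N}"
  define c where "c = (\<lambda>(B, i). (-1) ^ card (S - B) * (\<omega> ^ i) ^ (N - k) / K)"
  define AA :: "nat set \<times> nat \<Rightarrow> nat \<Rightarrow> complex" where "AA = (\<lambda>e j. 1)"
  define BB where "BB = (\<lambda>(e :: nat set \<times> nat) j. s (fst e) j * \<omega> ^ snd e)"
  have finS: "finite S" unfolding S_def by simp
  have cardS: "card S = k - 1" unfolding S_def by simp
  have Npos: "N > 0" and kN: "k < N" using assms unfolding N_def by (simp_all add: nat_mult_less_cancel_disj)
  have Kne: "K \<noteq> 0" using Npos assms unfolding K_def by simp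
  have kS: "{..<k} = insert 0 S" unfolding S_def using assms by auto
  have cardE: "card E = 2 ^ (k - 1) * k * d"
    unfolding E_def using finS by (simp add: card_cartesian_product card_Pow cardS N_def)
  have main: "W_pow k d x y = (\<Sum>e\<in>E. c e * (\<Prod>j<k. (AA e j * x j + BB e j * y j) ^ d))" for x y
  proof -
    define g where "g = (\<lambda>j. [:x j, y j:] ^ d - [:x j, - y j:] ^ d)"
    define q where "q = [:x 0, y 0:] ^ d * (\<Prod>j\<in>S. g j)"
    have polyq: "poly q t = (\<Sum>B\<in>Pow S. (-1) ^ card (S - B) * (\<Prod>j<k. (x j + s B j * t * y j) ^ d))" for t
    proof -
      have e1: "poly q t = (x 0 + t * y 0) ^ d * (\<Prod>j\<in>S. (x j + t * y j) ^ d + (- ((x j - t * y j) ^ d)))"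
        unfolding q_def g_def by (simp add: poly_prod algebra_simps)
      have e2: "(\<Prod>j\<in>S. (x j + t * y j) ^ d + (- ((x j - t * y j) ^ d))) =
          (\<Sum>B\<in>Pow S. (-1) ^ card (S - B) * ((\<Prod>j\<in>B. (x j + t * y j) ^ d) * (\<Prod>j\<in>S - B. (x j - t * y j) ^ d)))"
        by (subst prod_add[OF finS]) (simp add: prod_uminus mult_ac)
      have e3: "(\<Prod>j<k. (x j + s B j * t * y j) ^ d) =
          (x 0 + t * y 0) ^ d * ((\<Prod>j\<in>B. (x j + t * y j) ^ d) * (\<Prod>j\<in>S - B. (x j - t * y j) ^ d))"
        if B: "B \<in> Pow S" for B
      proof -
        have z: "0 \<notin> S" unfolding S_def by simp
        have "(\<Prod>j<k. (x j + s B j * t * y j) ^ d) = (x 0 + t * y 0) ^ d * (\<Prod>j\<in>S. (x j + s B j * t * y j) ^ d)"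
          unfolding kS using finS z by (simp add: s_def)
        also have "(\<Prod>j\<in>S. (x j + s B j * t * y j) ^ d) =
            (\<Prod>j\<in>S - B. (x j + s B j * t * y j) ^ d) * (\<Prod>j\<in>B. (x j + s B j * t * y j) ^ d)"
          using B finS by (intro prod.subset_diff) auto
        also have "(\<Prod>j\<in>S - B. (x j + s B j * t * y j) ^ d) = (\<Prod>j\<in>S - B. (x j - t * y j) ^ d)"
          using z by (intro prod.cong refl) (auto simp: s_def)
        also have "(\<Prod>j\<in>B. (x j + s B j * t * y j) ^ d) = (\<Prod>j\<in>B. (x j + t * y j) ^ d)"
          by (intro prod.cong refl) (auto simp: s_def)
        finally show ?thesis by (simp add: mult_ac)
      qed
      show ?thesis unfolding e1 e2 sum_distrib_left
      proof (intro sum.cong refl)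
        fix B assume B: "B \<in> Pow S"
        show "(x 0 + t * y 0) ^ d * ((- 1) ^ card (S - B) * ((\<Prod>j\<in>B. (x j + t * y j) ^ d) * (\<Prod>j\<in>S - B. (x j - t * y j) ^ d))) =
            (- 1) ^ card (S - B) * (\<Prod>j<k. (x j + s B j * t * y j) ^ d)"
          by (simp only: e3[OF B]) (simp add: mult_ac)
      qed
    qed
    have degq: "degree q < N + k"
    proof -
      have dl: "degree ([:a, b:] ^ d) \<le> d" for a b :: complex
      proof -
        have "degree ([:a, b:] ^ d) \<le> degree [:a, b:] * d" by (rule degree_power_le)
        also have "\<dots> \<le> 1 * d" by (intro mult_right_mono) auto
        finally show ?thesis by simp
      qed
      have dg: "degree (g j) \<le> d" for j
        unfolding g_def by (intro degree_diff_le dl)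
      have "degree (\<Prod>j\<in>S. g j) \<le> sum (degree \<circ> g) S" by (rule degree_prod_sum_le[OF finS])
      also have "\<dots> \<le> of_nat (card S) * d" by (rule sum_bounded_above) (simp add: dg)
      finally have dP: "degree (\<Prod>j\<in>S. g j) \<le> (k - 1) * d" by (simp add: cardS)
      have "degree q \<le> degree ([:x 0, y 0:] ^ d) + degree (\<Prod>j\<in>S. g j)"
        unfolding q_def by (rule degree_mult_le)
      also have "\<dots> \<le> d + (k - 1) * d" using dl dP by (intro add_mono) auto
      also have "\<dots> = N" unfolding N_def using assms by (cases k) auto
      finally show ?thesis using assms by simp
    qed
    have coeffq: "coeff q k = of_nat d * x 0 ^ (d - 1) * y 0 * (\<Prod>j\<in>S. 2 * of_nat d * x j ^ (d - 1) * y j)"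
    proof -
      have cg: "coeff (g j) m = (1 - (-1) ^ m) * coeff ([:x j, y j:] ^ d) m" for j m
        unfolding g_def by (simp add: coeff_g algebra_simps)
      have cg0: "coeff (g j) 0 = 0 \<and> coeff (g j) 2 = 0" for j by (simp add: cg)
      have cl: "coeff ([:a, b:] ^ d) 1 = of_nat d * a ^ (d - 1) * b" for a b :: complex
        by (simp only: coeff_pow_1) simp
      have cg1: "coeff (g j) 1 = 2 * of_nat d * x j ^ (d - 1) * y j" for j
        unfolding cg cl by simp
      note pl = prod_low[OF finS, of g, OF cg0]
      have k1: "k = Suc (k - 1)" using assms by simp
      have "coeff q k = coeff ([:x 0, y 0:] ^ d) 1 * coeff (\<Prod>j\<in>S. g j) (k - 1)"
        unfolding q_def by (subst k1, rule final_step) (use pl cardS k1 in auto)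
      also have "\<dots> = of_nat d * x 0 ^ (d - 1) * y 0 * (\<Prod>j\<in>S. 2 * of_nat d * x j ^ (d - 1) * y j)"
        using pl cardS unfolding cl cg1 by simp
      finally show ?thesis .
    qed
    have filt: "(\<Sum>i<N. (\<omega> ^ i) ^ (N - k) * poly q (\<omega> ^ i)) = of_nat N * coeff q k"
      unfolding \<omega>_def by (rule filter[OF Npos kN degq])
    have W: "W_pow k d x y = x 0 ^ (d - 1) * y 0 * (\<Prod>j\<in>S. x j ^ (d - 1) * y j)"
      unfolding W_pow_def kS using finS by (simp add: S_def)
    have "(\<Sum>e\<in>E. c e * (\<Prod>j<k. (AA e j * x j + BB e j * y j) ^ d))
        = (\<Sum>B\<in>Pow S. \<Sum>i<N. (-1) ^ card (S - B) * (\<omega> ^ i) ^ (N - k) / K * (\<Prod>j<k. (x j + s B j * \<omega> ^ i * y j) ^ d))"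
      unfolding E_def c_def AA_def BB_def by (simp add: sum.cartesian_product split_beta)
    also have "\<dots> = (\<Sum>i<N. (\<omega> ^ i) ^ (N - k) / K * poly q (\<omega> ^ i))"
      unfolding polyq by (subst sum.swap) (simp add: sum_distrib_left mult_ac)
    also have "\<dots> = (\<Sum>i<N. (\<omega> ^ i) ^ (N - k) * poly q (\<omega> ^ i)) / K"
      by (simp add: sum_divide_distrib)
    also have "\<dots> = W_pow k d x y"
      unfolding filt coeffq W K_def using finS Npos assms
      by (simp add: prod.distrib cardS field_simps)
    finally show ?thesis by simp
  qed
  have "ps_rank k (\<lambda>_. d) (W_pow k d) \<le> card E"
    by (rule rank_le[where c = c and A = AA and B = BB]) (use assms main in \<open>auto simp: E_def finS\<close>)
  then show ?thesis using cardE by simp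
qed

end
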